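(* Let $(X,d,0)$ be a pointed metric space, let $(Y_j)_{j\in\varGamma}$ be a family of subsets of $X$, and let $(R_j)_{j\in\varGamma}$ be Lipschitz maps $R_j:X\to Y_j$ with $R_j(0)=0$ (so $0\in Y_j$) and $M:=\sup_{j}\|R_j\|_{\operatorname{Lip}}<\infty$. Suppose $\mathcal{U}$ is an ultrafilter on $\varGamma$ such that $\lim_{\mathcal{U}}R_j(x)=x$ in $(X,d)$ for every $x\in X$. Then \[\operatorname{Lip}_0(X)\stackrel{c}{\hookrightarrow}\left(\bigoplus_{j\in\varGamma}\operatorname{Lip}_0(Y_j)\right)_{\ell_\infty},\] where each $Y_j$ is pointed at $0$.
   Context: $\operatorname{Lip}_0(Z)$ denotes the Banach space of real Lipschitz functions on the pointed metric space $Z$ vanishing at the base point, normed by the smallest Lipschitz constant $\|\cdot\|_{\operatorname{Lip}}$ (also used for Lipschitz constants of maps). $\left(\bigoplus_jZ_j\right)_{\ell_\infty}$ is the space of families $(z_j)$ with $\sup_j\|z_j\|<\infty$ and the sup norm. $X\stackrel{c}{\hookrightarrow}Y$ means $Y$ contains a complemented subspace isomorphic to $X$. *)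

theory Defs
  imports "HOL-Analysis.Analysis"
begin

text \<open>Lip_0(Y) for a subset Y of the pointed metric space with base point p \<in> Y.
  Functions on Y are represented canonically as functions on the whole type,
  extended by 0 outside Y.\<close>
definition lip0 :: "'a::metric_space \<Rightarrow> 'a set \<Rightarrow> ('a \<Rightarrow> real) set" where
  "lip0 p Y = {f. f p = 0 \<and> (\<forall>x. x \<notin> Y \<longrightarrow> f x = 0) \<and> (\<exists>C. C-lipschitz_on Y f)}"

definition lipnorm :: "'a::metric_space set \<Rightarrow> ('a \<Rightarrow> real) \<Rightarrow> real" where
  "lipnorm Y f = Inf {C. C-lipschitz_on Y f}"

definition linf_lip0 :: "'a::metric_space \<Rightarrow> ('j \<Rightarrow> 'a set) \<Rightarrow> ('j \<Rightarrow> 'a \<Rightarrow> real) set" where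
  "linf_lip0 p Y = {F. (\<forall>j. F j \<in> lip0 p (Y j)) \<and> bdd_above (range (\<lambda>j. lipnorm (Y j) (F j)))}"

definition linf_norm :: "('j \<Rightarrow> 'a::metric_space set) \<Rightarrow> ('j \<Rightarrow> 'a \<Rightarrow> real) \<Rightarrow> real" where
  "linf_norm Y F = (SUP j. lipnorm (Y j) (F j))"

text \<open>Lip_0(X) (X = the whole type, base point p) is isomorphic to a complemented
  subspace W of the l_infinity sum: there is a linear isomorphism T of Lip_0(X) onto W
  (bounded with bounded inverse) and a bounded linear projection P of the sum onto W.\<close>
definition lip0_compl_embeds :: "'a::metric_space \<Rightarrow> ('j \<Rightarrow> 'a set) \<Rightarrow> bool" where
  "lip0_compl_embeds p Y \<longleftrightarrow>
    (\<exists>W T P C.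
       W \<subseteq> linf_lip0 p Y \<and>
       T ` lip0 p UNIV = W \<and>
       (\<forall>f\<in>lip0 p UNIV. \<forall>g\<in>lip0 p UNIV. \<forall>a b.
          T (\<lambda>x. a * f x + b * g x) = (\<lambda>j x. a * T f j x + b * T g j x)) \<and>
       (\<forall>f\<in>lip0 p UNIV. linf_norm Y (T f) \<le> C * lipnorm UNIV f \<and>
                          lipnorm UNIV f \<le> C * linf_norm Y (T f)) \<and>
       P ` linf_lip0 p Y \<subseteq> W \<and>
       (\<forall>F\<in>W. P F = F) \<and>
       (\<forall>F\<in>linf_lip0 p Y. \<forall>G\<in>linf_lip0 p Y. \<forall>a b.
          P (\<lambda>j x. a * F j x + b * G j x) = (\<lambda>j x. a * P F j x + b * P G j x)) \<and>
       (\<forall>F\<in>linf_lip0 p Y. linf_norm Y (P F) \<le> C * linf_norm Y F))"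

definition is_ultrafilter :: "'j filter \<Rightarrow> bool" where
  "is_ultrafilter U \<longleftrightarrow> U \<noteq> bot \<and> (\<forall>P. eventually P U \<or> eventually (\<lambda>x. \<not> P x) U)"

end

theory Submission
  imports Defs
begin
lemma ulim_exists:
  fixes h :: "'j \<Rightarrow> real"
  assumes U: "is_ultrafilter U" and B: "\<And>j. \<bar>h j\<bar> \<le> B"
  shows "(h \<longlongrightarrow> Lim U h) U"
proof -
  have nb: "U \<noteq> bot" using U by (simp add: is_ultrafilter_def)
  have "filtermap h U \<noteq> bot" using nb by (simp add: filtermap_bot_iff)
  moreover have "eventually (\<lambda>y. y \<in> {-B..B}) (filtermap h U)"
  proof -
    have "\<forall>j. h j \<in> {-B..B}" using B by (auto simp: abs_le_iff) (smt (verit) B abs_le_iff)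
    then show ?thesis by (simp add: eventually_filtermap always_eventually)
  qed
  ultimately obtain x where x: "inf (nhds x) (filtermap h U) \<noteq> bot"
    using compact_filter[THEN iffD1, OF compact_Icc] by blast
  have "(h \<longlongrightarrow> x) U"
    unfolding tendsto_def
  proof (intro allI impI)
    fix S :: "real set" assume S: "open S" "x \<in> S"
    show "eventually (\<lambda>j. h j \<in> S) U"
    proof (rule ccontr)
      assume "\<not> eventually (\<lambda>j. h j \<in> S) U"
      then have "eventually (\<lambda>j. h j \<notin> S) U" using U unfolding is_ultrafilter_def by blast
      then have e1: "eventually (\<lambda>y. y \<notin> S) (filtermap h U)" by (simp add: eventually_filtermap)
      have e2: "eventually (\<lambda>y. y \<in> S) (nhds x)" using S by (rule eventually_nhds_in_open)
      have "eventually (\<lambda>_. False) (inf (nhds x) (filtermap h U))"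
        unfolding eventually_inf using e1 e2 by blast
      then show False using x by (simp add: eventually_False)
    qed
  qed
  then show ?thesis using tendsto_Lim nb by (metis trivial_limit_def)
qed

lemma lipnorm_le: "C-lipschitz_on S f \<Longrightarrow> lipnorm S f \<le> C"
  unfolding lipnorm_def
  by (rule cInf_lower) (auto intro: bdd_belowI[where m=0] simp: lipschitz_on_def)

lemma lipnorm_nonneg: "C-lipschitz_on S f \<Longrightarrow> 0 \<le> lipnorm S f"
  unfolding lipnorm_def
  by (rule cInf_greatest) (auto simp: lipschitz_on_def)

lemma lipnorm_lip: assumes "C-lipschitz_on S f" shows "(lipnorm S f)-lipschitz_on S f"
proof (rule lipschitz_onI)
  show "0 \<le> lipnorm S f" by (rule lipnorm_nonneg[OF assms])
  fix x y assume xy: "x \<in> S" "y \<in> S"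
  show "dist (f x) (f y) \<le> lipnorm S f * dist x y"
  proof (cases "x = y")
    case True then show ?thesis by simp
  next
    case False
    then have d: "dist x y > 0" by simp
    have "dist (f x) (f y) / dist x y \<le> lipnorm S f"
      unfolding lipnorm_def
    proof (rule cInf_greatest)
      show "{C. C-lipschitz_on S f} \<noteq> {}" using assms by blast
      fix D assume "D \<in> {C. C-lipschitz_on S f}"
      then have "dist (f x) (f y) \<le> D * dist x y" using xy by (auto simp: lipschitz_on_def)
      then show "dist (f x) (f y) / dist x y \<le> D" using d by (simp add: divide_le_eq)
    qed
    then show ?thesis using d by (simp add: divide_le_eq)
  qed
qed

definition restr :: "('j \<Rightarrow> 'a set) \<Rightarrow> ('a \<Rightarrow> real) \<Rightarrow> 'j \<Rightarrow> 'a \<Rightarrow> real" where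
  "restr Y f = (\<lambda>j x. if x \<in> Y j then f x else 0)"

lemma restr_lin: "restr Y (\<lambda>x. a * f x + b * g x) = (\<lambda>j x. a * restr Y f j x + b * restr Y g j x)"
  by (auto simp: restr_def fun_eq_iff)

lemma linf_norm_upper: "F \<in> linf_lip0 p Y \<Longrightarrow> lipnorm (Y j) (F j) \<le> linf_norm Y F"
  unfolding linf_norm_def linf_lip0_def by (auto intro: cSUP_upper)

lemma linf_norm_least: "(\<And>j. lipnorm (Y j) (F j) \<le> B) \<Longrightarrow> linf_norm Y F \<le> B"
  unfolding linf_norm_def by (rule cSUP_least) auto

lemma linf_lip: "F \<in> linf_lip0 p Y \<Longrightarrow> (linf_norm Y F)-lipschitz_on (Y j) (F j)"
proof -
  assume F: "F \<in> linf_lip0 p Y"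
  then obtain C where "C-lipschitz_on (Y j) (F j)" by (auto simp: linf_lip0_def lip0_def)
  from lipnorm_lip[OF this] show ?thesis
    by (rule lipschitz_on_mono) (auto intro: linf_norm_upper[OF F])
qed

lemma linf_norm_nonneg: "F \<in> linf_lip0 p Y \<Longrightarrow> 0 \<le> linf_norm Y F"
  using linf_lip[of F p Y undefined] by (rule lipschitz_on_nonneg)

theorem mainTheorem12:
  fixes p :: "'a::metric_space"
    and Y :: "'j \<Rightarrow> 'a set"
    and R :: "'j \<Rightarrow> 'a \<Rightarrow> 'a"
    and U :: "'j filter"
  assumes maps: "\<And>j. R j ` UNIV \<subseteq> Y j"
    and base: "\<And>j. R j p = p"
    and lip: "\<exists>M. \<forall>j. M-lipschitz_on UNIV (R j)"
    and ultra: "is_ultrafilter U"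
    and lim: "\<And>x. ((\<lambda>j. R j x) \<longlongrightarrow> x) U"
  shows "lip0_compl_embeds p Y"
proof -
  obtain M where M: "\<And>j. M-lipschitz_on UNIV (R j)" using lip by blast
  have M0: "0 \<le> M" using M lipschitz_on_nonneg by blast
  have nb: "U \<noteq> bot" using ultra by (simp add: is_ultrafilter_def)
  have RY: "R j x \<in> Y j" for j x using maps by blast
  have pY: "p \<in> Y j" for j using RY[of j p] base by simp
  have Rd: "dist (R j x) (R j y) \<le> M * dist x y" for j x y
    using M by (auto simp: lipschitz_on_def)
  define C where "C = max 1 M"
  define g where "g F x = Lim U (\<lambda>j. F j (R j x))" for F :: "'j \<Rightarrow> 'a \<Rightarrow> real" and x
  define W where "W = restr Y ` lip0 p UNIV"
  define P where "P F = restr Y (g F)" for F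
  have flip: "(lipnorm UNIV f)-lipschitz_on UNIV f" if "f \<in> lip0 p UNIV" for f
    using that lipnorm_lip by (auto simp: lip0_def)
  have fcont: "((\<lambda>j. f (h j)) \<longlongrightarrow> f x) U" if "f \<in> lip0 p UNIV" "(h \<longlongrightarrow> x) U" for f h x
  proof -
    have "continuous_on UNIV f" using flip[OF that(1)] by (rule lipschitz_on_continuous_on)
    then have "isCont f x" by (simp add: continuous_on_eq_continuous_at)
    then show ?thesis using that(2) by (rule isCont_tendsto_compose)
  qed
  have Ta: "restr Y f \<in> linf_lip0 p Y \<and> linf_norm Y (restr Y f) \<le> lipnorm UNIV f"
    if f: "f \<in> lip0 p UNIV" for f
  proof -
    have l: "(lipnorm UNIV f)-lipschitz_on (Y j) (restr Y f j)" for j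
      using flip[OF f] by (auto simp: lipschitz_on_def restr_def)
    then have n: "lipnorm (Y j) (restr Y f j) \<le> lipnorm UNIV f" for j by (rule lipnorm_le)
    have "restr Y f j \<in> lip0 p (Y j)" for j
      using f l pY by (auto simp: lip0_def restr_def)
    then have "restr Y f \<in> linf_lip0 p Y" using n
      by (auto simp: linf_lip0_def intro!: bdd_aboveI[where M="lipnorm UNIV f"])
    then show ?thesis using n linf_norm_least by blast
  qed
  have Tb: "lipnorm UNIV f \<le> linf_norm Y (restr Y f)" if f: "f \<in> lip0 p UNIV" for f
  proof -
    define N where "N = linf_norm Y (restr Y f)"
    have T: "restr Y f \<in> linf_lip0 p Y" using Ta[OF f] by blast
    have N0: "0 \<le> N" unfolding N_def using linf_norm_nonneg[OF T] .
    have "N-lipschitz_on UNIV f"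
    proof (rule lipschitz_onI)
      fix x y :: 'a
      have ev: "dist (f (R j x)) (f (R j y)) \<le> N * dist (R j x) (R j y)" for j
        using linf_lip[OF T, of j] RY[of j x] RY[of j y]
        by (auto simp: lipschitz_on_def restr_def N_def)
      have l1: "((\<lambda>j. dist (f (R j x)) (f (R j y))) \<longlongrightarrow> dist (f x) (f y)) U"
        by (intro tendsto_dist fcont[OF f] lim)
      have l2: "((\<lambda>j. N * dist (R j x) (R j y)) \<longlongrightarrow> N * dist x y) U"
        by (intro tendsto_mult_left tendsto_dist lim)
      show "dist (f x) (f y) \<le> N * dist x y"
        by (rule tendsto_le[OF nb l2 l1]) (simp add: ev)
    qed (rule N0)
    then show ?thesis unfolding N_def by (rule lipnorm_le)
  qed
  have gt: "((\<lambda>j. F j (R j x)) \<longlongrightarrow> g F x) U" if F: "F \<in> linf_lip0 p Y" for F x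
  proof -
    define B where "B = linf_norm Y F"
    have B0: "0 \<le> B" unfolding B_def by (rule linf_norm_nonneg[OF F])
    have Fp: "F j p = 0" for j using F by (auto simp: linf_lip0_def lip0_def)
    have "\<bar>F j (R j x)\<bar> \<le> B * (M * dist x p)" for j
    proof -
      have "dist (F j (R j x)) (F j (R j p)) \<le> B * dist (R j x) (R j p)"
        using linf_lip[OF F, of j] RY[of j x] RY[of j p] by (auto simp: lipschitz_on_def B_def)
      also have "\<dots> \<le> B * (M * dist x p)" using B0 Rd by (intro mult_left_mono) auto
      finally show ?thesis using Fp base by (simp add: dist_real_def)
    qed
    then show ?thesis unfolding g_def by (rule ulim_exists[OF ultra])
  qed
  have gc: "g F \<in> lip0 p UNIV \<and> lipnorm UNIV (g F) \<le> M * linf_norm Y F"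
    if F: "F \<in> linf_lip0 p Y" for F
  proof -
    define B where "B = linf_norm Y F"
    have B0: "0 \<le> B" unfolding B_def by (rule linf_norm_nonneg[OF F])
    have Fp: "F j p = 0" for j using F by (auto simp: linf_lip0_def lip0_def)
    have gp: "g F p = 0"
      using tendsto_unique[OF nb gt[OF F, of p]] Fp base by simp
    have L: "(M * B)-lipschitz_on UNIV (g F)"
    proof (rule lipschitz_onI)
      fix x y :: 'a
      have ev: "dist (F j (R j x)) (F j (R j y)) \<le> (M * B) * dist x y" for j
      proof -
        have "dist (F j (R j x)) (F j (R j y)) \<le> B * dist (R j x) (R j y)"
          using linf_lip[OF F, of j] RY[of j x] RY[of j y] by (auto simp: lipschitz_on_def B_def)
        also have "\<dots> \<le> B * (M * dist x y)" using B0 Rd by (intro mult_left_mono) auto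
        finally show ?thesis by (simp add: algebra_simps)
      qed
      have l1: "((\<lambda>j. dist (F j (R j x)) (F j (R j y))) \<longlongrightarrow> dist (g F x) (g F y)) U"
        by (intro tendsto_dist gt[OF F])
      show "dist (g F x) (g F y) \<le> (M * B) * dist x y"
        by (rule tendsto_le[OF nb tendsto_const l1]) (simp add: ev)
    qed (use M0 B0 in simp)
    then show ?thesis using gp lipnorm_le[OF L] by (auto simp: lip0_def B_def)
  qed
  have glin: "g (\<lambda>j x. a * F j x + b * G j x) = (\<lambda>x. a * g F x + b * g G x)"
    if F: "F \<in> linf_lip0 p Y" and G: "G \<in> linf_lip0 p Y" for F G a b
  proof
    fix x
    have "((\<lambda>j. a * F j (R j x) + b * G j (R j x)) \<longlongrightarrow> a * g F x + b * g G x) U"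
      by (intro tendsto_add tendsto_mult_left gt F G)
    then show "g (\<lambda>j x. a * F j x + b * G j x) x = a * g F x + b * g G x"
      unfolding g_def[of "\<lambda>j x. a * F j x + b * G j x"]
      using tendsto_Lim nb by (metis trivial_limit_def)
  qed
  have Pid: "P F = F" if "F \<in> W" for F
  proof -
    obtain f where f: "f \<in> lip0 p UNIV" and Ff: "F = restr Y f" using \<open>F \<in> W\<close> W_def by blast
    have "g F x = f x" for x
    proof -
      have "((\<lambda>j. F j (R j x)) \<longlongrightarrow> f x) U"
        using fcont[OF f lim[of x]] RY by (simp add: Ff restr_def)
      then show ?thesis unfolding g_def using tendsto_Lim nb by (metis trivial_limit_def)
    qed
    then show ?thesis by (simp add: P_def Ff fun_eq_iff restr_def)
  qed
  have C1: "1 \<le> C" and CM: "M \<le> C" by (auto simp: C_def)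
  show ?thesis
    unfolding lip0_compl_embeds_def
  proof (intro exI[of _ W] exI[of _ "restr Y"] exI[of _ P] exI[of _ C] conjI ballI allI)
    show "W \<subseteq> linf_lip0 p Y" using Ta W_def by blast
    show "restr Y ` lip0 p UNIV = W" by (simp add: W_def)
    show "restr Y (\<lambda>x. a * f x + b * g' x) = (\<lambda>j x. a * restr Y f j x + b * restr Y g' j x)"
      for f g' :: "'a \<Rightarrow> real" and a b by (rule restr_lin)
    fix f assume f: "f \<in> lip0 p UNIV"
    have l0: "0 \<le> lipnorm UNIV f" using flip[OF f] lipnorm_nonneg by blast
    have n0: "0 \<le> linf_norm Y (restr Y f)" using Ta[OF f] linf_norm_nonneg by blast
    show "linf_norm Y (restr Y f) \<le> C * lipnorm UNIV f"
      using Ta[OF f] l0 C1 by (smt (verit) mult_right_mono mult_cancel_right1)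
    show "lipnorm UNIV f \<le> C * linf_norm Y (restr Y f)"
      using Tb[OF f] n0 C1 by (smt (verit) mult_right_mono mult_cancel_right1)
  next
    show "P ` linf_lip0 p Y \<subseteq> W" using gc by (auto simp: P_def W_def)
  next
    fix F assume "F \<in> W" then show "P F = F" by (rule Pid)
  next
    fix F G a b assume F: "F \<in> linf_lip0 p Y" and G: "G \<in> linf_lip0 p Y"
    show "P (\<lambda>j x. a * F j x + b * G j x) = (\<lambda>j x. a * P F j x + b * P G j x)"
      unfolding P_def glin[OF F G] by (rule restr_lin)
  next
    fix F assume F: "F \<in> linf_lip0 p Y"
    have B0: "0 \<le> linf_norm Y F" by (rule linf_norm_nonneg[OF F])
    have "linf_norm Y (P F) \<le> lipnorm UNIV (g F)" using Ta gc[OF F] by (simp add: P_def)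
    also have "\<dots> \<le> M * linf_norm Y F" using gc[OF F] by blast
    also have "\<dots> \<le> C * linf_norm Y F" using CM B0 by (rule mult_right_mono)
    finally show "linf_norm Y (P F) \<le> C * linf_norm Y F" .
  qed
qed
end
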